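(* Let $1\le k\le n-2$, let $X[k]$, $V_1$, $\overline{V_1}$ be as described below, and let $\mathcal{G}$ be the graph with vertex set $\overline{V_1}$ in which distinct $u,v$ are adjacent iff some $w\in V_1$ is adjacent in $X[k]$ to both $u$ and $v$. Then $\mathcal{G}$ is isomorphic to the partial permutation graph $P(k,n-1)$; moreover, for each $w\in V_1$, the neighbors of $w$ in $\overline{V_1}$ form a maximal clique of $\mathcal{G}$ of size $n-k$.
   Context: $T_n=\{(1\,2),\dots,(1\,n)\}$. $X[k]$ is the multigraph whose vertices are the $k$-tuples of pairwise distinct elements of $[n]$, with, for each vertex $(i_1,\dots,i_k)$ and each $t\in T_n$, an edge joining it to $(t(i_1),\dots,t(i_k))$ (a loop if equal). $V_1$ is the set of vertices having $1$ as an entry, $\overline{V_1}$ the rest. For integers $1\le d\le m$, the partial permutation graph $P(d,m)$ has as vertices all $d$-tuples with pairwise distinct entries from $[m]$ (here identified with $\{2,\dots,n\}$ when $m=n-1$), two adjacent iff they differ in exactly one coordinate. *)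

theory Defs
  imports "HOL-Combinatorics.Transposition"
begin

definition tuples :: "nat \<Rightarrow> nat set \<Rightarrow> nat list set" where
  "tuples k S = {xs. length xs = k \<and> distinct xs \<and> set xs \<subseteq> S}"

definition XV :: "nat \<Rightarrow> nat \<Rightarrow> nat list set" where
  "XV n k = tuples k {1..n}"

text \<open>Adjacency in X[k]: there is an edge labelled by some t = (1 j), 2 \<le> j \<le> n,
  joining u to the componentwise image of u under t.\<close>
definition XAdj :: "nat \<Rightarrow> nat list \<Rightarrow> nat list \<Rightarrow> bool" where
  "XAdj n u v \<longleftrightarrow> (\<exists>j\<in>{2..n}. v = map (transpose 1 j) u)"

definition V1 :: "nat \<Rightarrow> nat \<Rightarrow> nat list set" where
  "V1 n k = {u \<in> XV n k. 1 \<in> set u}"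

definition V1bar :: "nat \<Rightarrow> nat \<Rightarrow> nat list set" where
  "V1bar n k = {u \<in> XV n k. 1 \<notin> set u}"

definition GAdj :: "nat \<Rightarrow> nat \<Rightarrow> nat list \<Rightarrow> nat list \<Rightarrow> bool" where
  "GAdj n k u v \<longleftrightarrow> u \<noteq> v \<and> (\<exists>w\<in>V1 n k. XAdj n w u \<and> XAdj n w v)"

text \<open>Partial permutation graph P(d,m): d-tuples of distinct entries of S (|S| = m),
  adjacent iff they differ in exactly one coordinate.\<close>
definition PV :: "nat \<Rightarrow> nat set \<Rightarrow> nat list set" where
  "PV d S = tuples d S"

definition PAdj :: "nat list \<Rightarrow> nat list \<Rightarrow> bool" where
  "PAdj xs ys \<longleftrightarrow> card {i. i < length xs \<and> xs ! i \<noteq> ys ! i} = 1"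

definition graph_iso :: "'a set \<Rightarrow> ('a \<Rightarrow> 'a \<Rightarrow> bool) \<Rightarrow> 'b set \<Rightarrow> ('b \<Rightarrow> 'b \<Rightarrow> bool) \<Rightarrow> bool" where
  "graph_iso V E V' E' \<longleftrightarrow> (\<exists>f. bij_betw f V V' \<and> (\<forall>u\<in>V. \<forall>v\<in>V. E u v \<longleftrightarrow> E' (f u) (f v)))"

definition is_clique :: "'a set \<Rightarrow> ('a \<Rightarrow> 'a \<Rightarrow> bool) \<Rightarrow> 'a set \<Rightarrow> bool" where
  "is_clique V E K \<longleftrightarrow> K \<subseteq> V \<and> (\<forall>u\<in>K. \<forall>v\<in>K. u \<noteq> v \<longrightarrow> E u v)"

definition is_maximal_clique :: "'a set \<Rightarrow> ('a \<Rightarrow> 'a \<Rightarrow> bool) \<Rightarrow> 'a set \<Rightarrow> bool" where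
  "is_maximal_clique V E K \<longleftrightarrow> is_clique V E K \<and> (\<forall>K'. is_clique V E K' \<and> K \<subseteq> K' \<longrightarrow> K' = K)"

end

theory Submission
  imports Defs
begin

lemma V1bar_iff: "u \<in> V1bar n k \<longleftrightarrow> length u = k \<and> distinct u \<and> set u \<subseteq> {2..n}"
proof -
  have "(set u \<subseteq> {1..n} \<and> 1 \<notin> set u) \<longleftrightarrow> set u \<subseteq> {2..n}"
  proof
    assume "set u \<subseteq> {2..n}" then show "set u \<subseteq> {1..n} \<and> 1 \<notin> set u" by auto
  next
    assume H: "set u \<subseteq> {1..n} \<and> 1 \<notin> set u"
    show "set u \<subseteq> {2..n}"
    proof
      fix x assume "x \<in> set u" then have "x \<in> {1..n}" "x \<noteq> 1" using H by auto
      then show "x \<in> {2..n}" by auto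
    qed
  qed
  then show ?thesis unfolding V1bar_def XV_def tuples_def by auto
qed

lemma V1_iff: "w \<in> V1 n k \<longleftrightarrow> length w = k \<and> distinct w \<and> set w \<subseteq> {1..n} \<and> 1 \<in> set w"
  unfolding V1_def XV_def tuples_def by auto

lemma XAdj_char:
  assumes w: "w \<in> V1 n k" and p: "p < k" "w ! p = 1" and u: "u \<in> V1bar n k"
  shows "XAdj n w u \<longleftrightarrow> (\<forall>i<k. i \<noteq> p \<longrightarrow> u ! i = w ! i)"
proof
  have lw: "length w = k" "distinct w" using w by (auto simp: V1_iff)
  have lu: "length u = k" "distinct u" "set u \<subseteq> {2..n}" using u by (auto simp: V1bar_iff)
  {
    assume "XAdj n w u"
    then obtain j where j: "j \<in> {2..n}" and ue: "u = map (transpose 1 j) w"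
      unfolding XAdj_def by blast
    have jn: "j \<notin> set w"
    proof
      assume "j \<in> set w"
      then have "transpose 1 j j \<in> set u" using ue by (simp only: set_map) blast
      then have "1 \<in> set u" by simp
      then show False using lu by auto
    qed
    show "\<forall>i<k. i \<noteq> p \<longrightarrow> u ! i = w ! i"
    proof (intro allI impI)
      fix i assume i: "i < k" "i \<noteq> p"
      have "w ! i \<noteq> 1" using lw p i by (metis nth_eq_iff_index_eq)
      moreover have "w ! i \<noteq> j" using jn i lw by auto
      ultimately show "u ! i = w ! i" using ue i lw by simp
    qed
  }
  {
    assume H: "\<forall>i<k. i \<noteq> p \<longrightarrow> u ! i = w ! i"
    define j where "j = u ! p"
    have jin: "j \<in> {2..n}" using lu p unfolding j_def by (auto dest!: nth_mem)
    have "u = map (transpose 1 j) w"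
    proof (rule nth_equalityI)
      show "length u = length (map (transpose 1 j) w)" using lu lw by simp
      fix i assume "i < length u"
      then have i: "i < k" using lu by simp
      show "u ! i = map (transpose 1 j) w ! i"
      proof (cases "i = p")
        case True then show ?thesis using p lw j_def by simp
      next
        case False
        have "w ! i \<noteq> 1" using lw p i False by (metis nth_eq_iff_index_eq)
        moreover have "w ! i \<noteq> j" using H i False lu p unfolding j_def
          by (metis nth_eq_iff_index_eq)
        ultimately show ?thesis using H i False lw by simp
      qed
    qed
    then show "XAdj n w u" unfolding XAdj_def using jin by blast
  }
qed

lemma GAdj_char:
  assumes u: "u \<in> V1bar n k" and v: "v \<in> V1bar n k"
  shows "GAdj n k u v \<longleftrightarrow> u \<noteq> v \<and> (\<exists>p<k. \<forall>i<k. i \<noteq> p \<longrightarrow> u ! i = v ! i)"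
proof
  assume "GAdj n k u v"
  then obtain w where uv: "u \<noteq> v" and w: "w \<in> V1 n k" "XAdj n w u" "XAdj n w v"
    unfolding GAdj_def by blast
  then obtain p where p: "p < length w" "w ! p = 1" by (metis V1_iff in_set_conv_nth)
  have "length w = k" using w by (simp add: V1_iff)
  with p have pk: "p < k" by simp
  have "\<forall>i<k. i \<noteq> p \<longrightarrow> u ! i = w ! i" using XAdj_char[OF w(1) pk p(2) u] w by blast
  moreover have "\<forall>i<k. i \<noteq> p \<longrightarrow> v ! i = w ! i" using XAdj_char[OF w(1) pk p(2) v] w by blast
  ultimately show "u \<noteq> v \<and> (\<exists>p<k. \<forall>i<k. i \<noteq> p \<longrightarrow> u ! i = v ! i)" using uv pk by auto
next
  assume "u \<noteq> v \<and> (\<exists>p<k. \<forall>i<k. i \<noteq> p \<longrightarrow> u ! i = v ! i)"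
  then obtain p where uv: "u \<noteq> v" and pk: "p < k" and H: "\<forall>i<k. i \<noteq> p \<longrightarrow> u ! i = v ! i"
    by blast
  have lu: "length u = k" "distinct u" "set u \<subseteq> {2..n}" using u by (auto simp: V1bar_iff)
  define w where "w = u[p := 1]"
  have wd: "distinct w" unfolding w_def using lu by (auto intro!: distinct_list_update)
  have ws: "set w \<subseteq> {1..n}"
  proof -
    have "set u \<subseteq> {1..n}" using lu(3) by auto
    moreover have "1 \<le> n" proof -
      have "u ! p \<in> set u" using lu pk by simp
      then show ?thesis using lu(3) by auto
    qed
    ultimately show ?thesis using set_update_subset_insert[of u p 1] by (auto simp: w_def)
  qed
  have w1: "1 \<in> set w" unfolding w_def using lu pk by (simp add: set_update_memI)
  have wV: "w \<in> V1 n k" using wd ws w1 lu by (simp add: V1_iff w_def)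
  have wp: "w ! p = 1" unfolding w_def using lu pk by simp
  have "XAdj n w u" using XAdj_char[OF wV pk wp u] by (simp add: w_def)
  moreover have "XAdj n w v" using XAdj_char[OF wV pk wp v] H by (simp add: w_def)
  ultimately show "GAdj n k u v" unfolding GAdj_def using uv wV by blast
qed

lemma card_one:
  assumes "length u = k" "length v = k"
  shows "(u \<noteq> v \<and> (\<exists>p<k. \<forall>i<k. i \<noteq> p \<longrightarrow> u ! i = v ! i))
     \<longleftrightarrow> card {i. i < length u \<and> u ! i \<noteq> v ! i} = 1"
proof
  assume "u \<noteq> v \<and> (\<exists>p<k. \<forall>i<k. i \<noteq> p \<longrightarrow> u ! i = v ! i)"
  then obtain p where uv: "u \<noteq> v" and pk: "p < k" and H: "\<forall>i<k. i \<noteq> p \<longrightarrow> u ! i = v ! i"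
    by blast
  have "u ! p \<noteq> v ! p"
  proof
    assume "u ! p = v ! p"
    then have "u = v" using H assms by (intro nth_equalityI) auto
    then show False using uv by simp
  qed
  then have "{i. i < length u \<and> u ! i \<noteq> v ! i} = {p}" using H pk assms by auto
  then show "card {i. i < length u \<and> u ! i \<noteq> v ! i} = 1" by simp
next
  assume "card {i. i < length u \<and> u ! i \<noteq> v ! i} = 1"
  then obtain p where D: "{i. i < length u \<and> u ! i \<noteq> v ! i} = {p}" by (rule card_1_singletonE)
  then have "p < k" "u ! p \<noteq> v ! p" using assms by auto
  moreover have "\<forall>i<k. i \<noteq> p \<longrightarrow> u ! i = v ! i" using D assms by auto
  ultimately show "u \<noteq> v \<and> (\<exists>p<k. \<forall>i<k. i \<noteq> p \<longrightarrow> u ! i = v ! i)" by auto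
qed

lemma iso_part:
  shows "graph_iso (V1bar n k) (GAdj n k) (PV k {1..n-1}) PAdj"
proof -
  define f where "f = map (\<lambda>x::nat. x - 1)"
  have bij: "bij_betw f (V1bar n k) (PV k {1..n-1})"
  proof (rule bij_betw_byWitness[where f' = "map Suc"])
    show "\<forall>a\<in>V1bar n k. map Suc (f a) = a"
    proof
      fix a assume "a \<in> V1bar n k"
      then have s: "set a \<subseteq> {2..n}" by (simp add: V1bar_iff)
      have "\<And>x. x \<in> set a \<Longrightarrow> Suc (x - 1) = x"
      proof -
        fix x assume "x \<in> set a" then have "x \<ge> 2" using s by auto
        then show "Suc (x - 1) = x" by simp
      qed
      then show "map Suc (f a) = a" unfolding f_def by (simp add: map_idI)
    qed
    show "\<forall>a'\<in>PV k {1..n - 1}. f (map Suc a') = a'"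
      unfolding f_def by (auto intro!: map_idI)
    show "f ` V1bar n k \<subseteq> PV k {1..n - 1}"
    proof
      fix y assume "y \<in> f ` V1bar n k"
      then obtain u where u: "u \<in> V1bar n k" "y = f u" by blast
      have lu: "length u = k" "distinct u" "set u \<subseteq> {2..n}" using u by (auto simp: V1bar_iff)
      have "inj_on (\<lambda>x::nat. x - 1) (set u)"
      proof (rule inj_onI)
        fix x y assume "x \<in> set u" "y \<in> set u" "x - 1 = y - 1"
        moreover have "x \<ge> 2" "y \<ge> 2" using lu(3) calculation by auto
        ultimately show "x = y" by simp
      qed
      then have "distinct y" using lu u by (simp add: f_def distinct_map)
      moreover have "set y \<subseteq> {1..n-1}"
      proof
        fix z assume "z \<in> set y"
        then obtain x where "x \<in> set u" "z = x - 1" using u by (auto simp: f_def)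
        moreover have "x \<in> {2..n}" using lu(3) calculation by auto
        ultimately show "z \<in> {1..n-1}" by auto
      qed
      ultimately show "y \<in> PV k {1..n - 1}" using lu u by (simp add: PV_def tuples_def f_def)
    qed
    show "map Suc ` PV k {1..n - 1} \<subseteq> V1bar n k"
    proof
      fix y assume "y \<in> map Suc ` PV k {1..n - 1}"
      then obtain u where u: "u \<in> PV k {1..n-1}" "y = map Suc u" by blast
      have "set y \<subseteq> {2..n}"
      proof
        fix z assume "z \<in> set y"
        then obtain x where "x \<in> set u" "z = Suc x" using u by auto
        moreover have "x \<in> {1..n-1}" using u calculation by (auto simp: PV_def tuples_def)
        ultimately show "z \<in> {2..n}" by auto
      qed
      then show "y \<in> V1bar n k" using u by (auto simp: PV_def tuples_def V1bar_iff distinct_map)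
    qed
  qed
  have "\<forall>u\<in>V1bar n k. \<forall>v\<in>V1bar n k. GAdj n k u v \<longleftrightarrow> PAdj (f u) (f v)"
  proof (intro ballI)
    fix u v assume u: "u \<in> V1bar n k" and v: "v \<in> V1bar n k"
    have lu: "length u = k" "set u \<subseteq> {2..n}" using u by (auto simp: V1bar_iff)
    have lv: "length v = k" "set v \<subseteq> {2..n}" using v by (auto simp: V1bar_iff)
    have "{i. i < length (f u) \<and> f u ! i \<noteq> f v ! i} = {i. i < length u \<and> u ! i \<noteq> v ! i}"
    proof (intro Collect_cong)
      fix i
      show "(i < length (f u) \<and> f u ! i \<noteq> f v ! i) = (i < length u \<and> u ! i \<noteq> v ! i)"
      proof (cases "i < k")
        case True
        have "u ! i \<in> set u" "v ! i \<in> set v" using True lu lv by simp_all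
        then have "u ! i \<ge> 2" "v ! i \<ge> 2" using lu lv by auto
        then have "(u ! i - 1 \<noteq> v ! i - 1) = (u ! i \<noteq> v ! i)" by linarith
        then show ?thesis using True lu lv by (simp add: f_def)
      qed (use lu in \<open>auto simp: f_def\<close>)
    qed
    then show "GAdj n k u v \<longleftrightarrow> PAdj (f u) (f v)"
      unfolding PAdj_def GAdj_char[OF u v] card_one[OF lu(1) lv(1)] by simp
  qed
  then show ?thesis unfolding graph_iso_def using bij by blast
qed

theorem mainTheorem9:
  fixes n k :: nat
  assumes "1 \<le> k" and "k + 2 \<le> n"
  shows "graph_iso (V1bar n k) (GAdj n k) (PV k {1..n-1}) PAdj
    \<and> (\<forall>w\<in>V1 n k.
         is_maximal_clique (V1bar n k) (GAdj n k) {u \<in> V1bar n k. XAdj n w u}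
       \<and> card {u \<in> V1bar n k. XAdj n w u} = n - k)"
proof (intro conjI ballI iso_part)
  fix w assume w: "w \<in> V1 n k"
  have lw: "length w = k" "distinct w" "set w \<subseteq> {1..n}" "1 \<in> set w" using w by (auto simp: V1_iff)
  then obtain p where pk: "p < k" and wp: "w ! p = 1" by (metis in_set_conv_nth)
  define N where "N = {u \<in> V1bar n k. XAdj n w u}"
  have Nchar: "N = {u \<in> V1bar n k. \<forall>i<k. i \<noteq> p \<longrightarrow> u ! i = w ! i}"
    unfolding N_def using XAdj_char[OF w pk wp] by blast
  have Nimg: "N = (\<lambda>j. w[p := j]) ` ({2..n} - set w)"
  proof
    show "N \<subseteq> (\<lambda>j. w[p := j]) ` ({2..n} - set w)"
    proof
      fix u assume "u \<in> N"
      then have u: "u \<in> V1bar n k" and H: "\<forall>i<k. i \<noteq> p \<longrightarrow> u ! i = w ! i" by (auto simp: Nchar)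
      have lu: "length u = k" "distinct u" "set u \<subseteq> {2..n}" using u by (auto simp: V1bar_iff)
      define j where "j = u ! p"
      have j2: "j \<in> {2..n}" using lu pk unfolding j_def by (auto dest!: nth_mem)
      have jw: "j \<notin> set w"
      proof
        assume "j \<in> set w"
        then obtain i where i: "i < k" "w ! i = j" using lw by (metis in_set_conv_nth)
        show False
        proof (cases "i = p")
          case True then show ?thesis using i wp j2 by simp
        next
          case False
          then have "u ! i = u ! p" using H i j_def by simp
          then show ?thesis using lu i pk False by (metis nth_eq_iff_index_eq)
        qed
      qed
      have "u = w[p := j]"
        by (rule nth_equalityI) (use lu lw H pk j_def in \<open>auto simp: nth_list_update\<close>)
      then show "u \<in> (\<lambda>j. w[p := j]) ` ({2..n} - set w)" using j2 jw by blast
    qed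
    show "(\<lambda>j. w[p := j]) ` ({2..n} - set w) \<subseteq> N"
    proof
      fix u assume "u \<in> (\<lambda>j. w[p := j]) ` ({2..n} - set w)"
      then obtain j where j: "j \<in> {2..n}" "j \<notin> set w" and ue: "u = w[p := j]" by blast
      have "distinct u" unfolding ue using lw j by (auto intro!: distinct_list_update)
      moreover have "set u \<subseteq> {2..n}"
        unfolding ue using set_update_distinct[of w p j] lw pk wp j
        by (auto simp: subset_iff)
      ultimately have "u \<in> V1bar n k" using lw by (simp add: V1bar_iff ue)
      then show "u \<in> N" unfolding Nchar using ue by auto
    qed
  qed
  have inj: "inj_on (\<lambda>j. w[p := j]) ({2..n} - set w)"
    by (rule inj_onI) (metis lw(1) pk nth_list_update_eq)
  have cw: "card ({2..n} \<inter> set w) = k - 1"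
  proof -
    have "{2..n} \<inter> set w = set w - {1}" using lw by auto
    then show ?thesis using lw distinct_card[of w] by simp
  qed
  have cardN: "card N = n - k"
    unfolding Nimg card_image[OF inj] using card_Diff_subset_Int[of "{2..n}" "set w"] cw assms
    by simp
  show "card {u \<in> V1bar n k. XAdj n w u} = n - k" using cardN N_def by simp
  have clique: "is_clique (V1bar n k) (GAdj n k) N"
    unfolding is_clique_def GAdj_def N_def using w by blast
  have "is_maximal_clique (V1bar n k) (GAdj n k) N"
    unfolding is_maximal_clique_def
  proof (intro conjI clique allI impI)
    fix K' assume K': "is_clique (V1bar n k) (GAdj n k) K' \<and> N \<subseteq> K'"
    have "K' \<subseteq> N"
    proof
      fix u assume uK: "u \<in> K'"
      show "u \<in> N"
      proof (rule ccontr)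
        assume uN: "u \<notin> N"
        have "N \<noteq> {}" using cardN assms by auto
        then obtain a where a: "a \<in> N" by blast
        have fN: "finite N" using cardN assms by (intro card_ge_0_finite) simp
        have "card (N - {a}) \<ge> 1" using cardN assms a card_Diff_singleton[OF a] by simp
        then have "N - {a} \<noteq> {}" by (metis card.empty not_one_le_zero)
        then obtain b where b: "b \<in> N" "b \<noteq> a" by blast
        have u: "u \<in> V1bar n k" using K' uK by (auto simp: is_clique_def)
        have aV: "a \<in> V1bar n k" and Ha: "\<forall>i<k. i \<noteq> p \<longrightarrow> a ! i = w ! i" using a by (auto simp: Nchar)
        have bV: "b \<in> V1bar n k" and Hb: "\<forall>i<k. i \<noteq> p \<longrightarrow> b ! i = w ! i" using b by (auto simp: Nchar)
        have la: "length a = k" using aV by (simp add: V1bar_iff)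
        have lb: "length b = k" using bV by (simp add: V1bar_iff)
        have "a ! p \<noteq> b ! p"
        proof
          assume "a ! p = b ! p"
          then have "a = b" using Ha Hb la lb by (intro nth_equalityI) (auto, metis)
          then show False using b by simp
        qed
        have "u \<noteq> a" using a uN by auto
        then have "GAdj n k u a" using K' uK a by (auto simp: is_clique_def)
        then obtain q where q: "q < k" "\<forall>i<k. i \<noteq> q \<longrightarrow> u ! i = a ! i"
          using GAdj_char[OF u aV] by blast
        have "u \<noteq> b" using b uN by auto
        then have "GAdj n k u b" using K' uK b by (auto simp: is_clique_def)
        then obtain q' where q': "q' < k" "\<forall>i<k. i \<noteq> q' \<longrightarrow> u ! i = b ! i"
          using GAdj_char[OF u bV] by blast
        have "q = p \<or> q' = p"
        proof (rule ccontr)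
          assume "\<not> (q = p \<or> q' = p)"
          then have "u ! p = a ! p" "u ! p = b ! p" using q(2) q'(2) pk by auto
          then show False using \<open>a ! p \<noteq> b ! p\<close> by simp
        qed
        then have "\<forall>i<k. i \<noteq> p \<longrightarrow> u ! i = w ! i" using q q' Ha Hb by auto
        then have "u \<in> N" using u by (simp add: Nchar)
        then show False using uN by simp
      qed
    qed
    then show "K' = N" using K' by blast
  qed
  then show "is_maximal_clique (V1bar n k) (GAdj n k) {u \<in> V1bar n k. XAdj n w u}"
    using N_def by simp
qed

end
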